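(* Let $G:\mathbb{R}^k\to\mathbb{R}^n$ and $G^\dagger:\mathbb{R}^n\to\mathbb{R}^k$ be maps such that $G\circ G^\dagger$ is a $\delta$-approximate projector for some $\delta\ge 0$, and let $A\in\mathbb{R}^{m\times n}$ satisfy $REC(R(G),\alpha,\beta)$ with $0<\alpha<\beta$. Fix $x^*\in R(G)$, $y=Ax^*$, $f(x)=\|Ax-y\|_2^2$. For any $x_t\in R(G)$, define $w_t=x_t-\frac{1}{\beta}A^T(Ax_t-y)$ and $x_{t+1}=G(G^\dagger(w_t))$. Then $$f(x_{t+1})\le\Big(\frac{\beta}{\alpha}-1\Big)f(x_t)+\beta\delta.$$
   Context: $R(G)=\{G(z):z\in\mathbb{R}^k\}$ denotes the range of $G$. Restricted Eigenvalue Constraint: for $S\subset\mathbb{R}^n$ and $0<\alpha<\beta$, a matrix $A\in\mathbb{R}^{m\times n}$ satisfies $REC(S,\alpha,\beta)$ if $\alpha\|x_1-x_2\|^2\le\|A(x_1-x_2)\|^2\le\beta\|x_1-x_2\|^2$ for all $x_1,x_2\in S$. $\delta$-approximate projector: the composite map $G\circ G^\dagger:\mathbb{R}^n\to R(G)$ is a $\delta$-approximate projector if for all $x\in\mathbb{R}^n$, $\|x-G(G^\dagger(x))\|^2\le \inf_{z\in\mathbb{R}^k}\|x-G(z)\|^2+\delta$. All norms are Euclidean. *)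

theory Defs
  imports "HOL-Analysis.Analysis"
begin

definition REC :: "(real^'n) set \<Rightarrow> real^'n^'m \<Rightarrow> real \<Rightarrow> real \<Rightarrow> bool" where
  "REC S A \<alpha> \<beta> \<longleftrightarrow> 0 < \<alpha> \<and> \<alpha> < \<beta> \<and>
     (\<forall>x1\<in>S. \<forall>x2\<in>S. \<alpha> * (norm (x1 - x2))\<^sup>2 \<le> (norm (A *v (x1 - x2)))\<^sup>2 \<and>
                      (norm (A *v (x1 - x2)))\<^sup>2 \<le> \<beta> * (norm (x1 - x2))\<^sup>2)"

definition approx_projector ::
  "(real^'k \<Rightarrow> real^'n) \<Rightarrow> (real^'n \<Rightarrow> real^'k) \<Rightarrow> real \<Rightarrow> bool" where
  "approx_projector G Gd \<delta> \<longleftrightarrow>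
     (\<forall>x. (norm (x - G (Gd x)))\<^sup>2 \<le> (INF z. (norm (x - G z))\<^sup>2) + \<delta>)"

end

theory Submission
  imports Defs
begin

lemma nexp: "(norm (- a - c *\<^sub>R (g::'a::real_inner)))\<^sup>2 = (norm a)\<^sup>2 + 2*c * (g \<bullet> a) + c^2 * (norm g)\<^sup>2"
proof -
  have "(norm (- a - c *\<^sub>R g))\<^sup>2 = (- a - c *\<^sub>R g) \<bullet> (- a - c *\<^sub>R g)" by (rule power2_norm_eq_inner)
  also have "\<dots> = a \<bullet> a + 2*c * (g \<bullet> a) + c^2 * (g \<bullet> g)"
    by (simp add: inner_diff_left inner_diff_right inner_commute power2_eq_square algebra_simps)
  finally show ?thesis by (simp add: power2_norm_eq_inner)
qed


lemma adj: "(transpose (A::real^'n^'m) *v u) \<bullet> v = u \<bullet> (A *v v)"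
  by (simp add: dot_lmul_matrix)

theorem mainTheorem2:
  fixes G :: "real^'k \<Rightarrow> real^'n" and Gd :: "real^'n \<Rightarrow> real^'k"
    and A :: "real^'n^'m" and \<alpha> \<beta> \<delta> :: real
    and xstar xt :: "real^'n"
  assumes "\<delta> \<ge> 0"
    and "approx_projector G Gd \<delta>"
    and "0 < \<alpha>" and "\<alpha> < \<beta>"
    and "REC (range G) A \<alpha> \<beta>"
    and "xstar \<in> range G"
    and "xt \<in> range G"
  shows "let y = A *v xstar;
             f = (\<lambda>x. (norm (A *v x - y))\<^sup>2);
             wt = xt - (1 / \<beta>) *\<^sub>R (transpose A *v (A *v xt - y));
             xt1 = G (Gd wt)
         in f xt1 \<le> (\<beta> / \<alpha> - 1) * f xt + \<beta> * \<delta>"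
proof -
  define u where "u = A *v xt - A *v xstar"
  define g where "g = transpose A *v u"
  define w where "w = xt - (1/\<beta>) *\<^sub>R g"
  define x1 where "x1 = G (Gd w)"
  have bpos: "\<beta> > 0" using assms by linarith
  have x1R: "x1 \<in> range G" unfolding x1_def by simp
  have rec: "\<And>a b. a \<in> range G \<Longrightarrow> b \<in> range G \<Longrightarrow>
      \<alpha> * (norm (a - b))\<^sup>2 \<le> (norm (A *v (a - b)))\<^sup>2 \<and> (norm (A *v (a - b)))\<^sup>2 \<le> \<beta> * (norm (a - b))\<^sup>2"
    using assms(5) unfolding REC_def by blast
  have proj: "(norm (w - x1))\<^sup>2 \<le> (norm (w - xstar))\<^sup>2 + \<delta>"
  proof -
    obtain z where z: "xstar = G z" using assms(6) by blast
    have "(INF z. (norm (w - G z))\<^sup>2) \<le> (norm (w - G z))\<^sup>2"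
      by (rule cINF_lower) (auto intro: bdd_belowI[where m=0])
    moreover have "(norm (w - G (Gd w)))\<^sup>2 \<le> (INF z. (norm (w - G z))\<^sup>2) + \<delta>"
      using assms(2) unfolding approx_projector_def by blast
    ultimately show ?thesis unfolding x1_def z by linarith
  qed
  define d where "d = x1 - xt"
  define e where "e = xstar - xt"
  have fx1: "(norm (A *v x1 - A *v xstar))\<^sup>2 = (norm u)\<^sup>2 + 2 * (g \<bullet> d) + (norm (A *v d))\<^sup>2"
  proof -
    have "A *v x1 - A *v xstar = u + A *v d"
      unfolding u_def d_def by (simp add: matrix_vector_mult_diff_distrib)
    thus ?thesis unfolding g_def adj
      by (simp add: power2_norm_eq_inner inner_add_left inner_add_right inner_commute)
  qed
  have Ad: "(norm (A *v d))\<^sup>2 \<le> \<beta> * (norm d)\<^sup>2" using rec[OF x1R assms(7)] d_def by simp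
  have Ae: "\<alpha> * (norm e)\<^sup>2 \<le> (norm u)\<^sup>2"
  proof -
    have "A *v (xt - xstar) = u" unfolding u_def by (simp add: matrix_vector_mult_diff_distrib)
    moreover have "norm (xt - xstar) = norm e" unfolding e_def by (simp add: norm_minus_commute)
    ultimately show ?thesis using rec[OF assms(7) assms(6)] by simp
  qed
  have ge: "g \<bullet> e = - (norm u)\<^sup>2"
  proof -
    have "A *v e = - u" unfolding e_def u_def by (simp add: matrix_vector_mult_diff_distrib)
    thus ?thesis unfolding g_def adj by (simp add: power2_norm_eq_inner)
  qed
  have wd: "(norm (w - x1))\<^sup>2 = (norm d)\<^sup>2 + (2/\<beta>) * (g \<bullet> d) + (norm g)\<^sup>2 / \<beta>^2"
  proof -
    have "w - x1 = - d - (1/\<beta>) *\<^sub>R g" unfolding w_def d_def by simp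
    thus ?thesis using nexp[of d "1/\<beta>" g] by (simp add: power_divide)
  qed
  have we: "(norm (w - xstar))\<^sup>2 = (norm e)\<^sup>2 + (2/\<beta>) * (g \<bullet> e) + (norm g)\<^sup>2 / \<beta>^2"
  proof -
    have "w - xstar = - e - (1/\<beta>) *\<^sub>R g" unfolding w_def e_def by simp
    thus ?thesis using nexp[of e "1/\<beta>" g] by (simp add: power_divide)
  qed
  have key: "(norm d)\<^sup>2 + (2/\<beta>) * (g \<bullet> d) \<le> (norm e)\<^sup>2 + (2/\<beta>) * (g \<bullet> e) + \<delta>"
    using proj wd we by linarith
  hence key2: "\<beta> * (norm d)\<^sup>2 + 2 * (g \<bullet> d) \<le> \<beta> * (norm e)\<^sup>2 - 2 * (norm u)\<^sup>2 + \<beta> * \<delta>"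
  proof -
    have "\<beta> * ((norm d)\<^sup>2 + (2/\<beta>) * (g \<bullet> d)) \<le> \<beta> * ((norm e)\<^sup>2 + (2/\<beta>) * (g \<bullet> e) + \<delta>)"
      using key bpos by (intro mult_left_mono) auto
    thus ?thesis using bpos ge by (simp add: distrib_left right_diff_distrib)
  qed
  have ee: "\<beta> * (norm e)\<^sup>2 \<le> (\<beta>/\<alpha>) * (norm u)\<^sup>2"
  proof -
    have "\<beta> * (norm e)\<^sup>2 = (\<beta>/\<alpha>) * (\<alpha> * (norm e)\<^sup>2)" using assms(3) by simp
    also have "\<dots> \<le> (\<beta>/\<alpha>) * (norm u)\<^sup>2"
      using Ae bpos assms(3) by (intro mult_left_mono) auto
    finally show ?thesis .
  qed
  have "(norm (A *v x1 - A *v xstar))\<^sup>2 \<le> (\<beta>/\<alpha> - 1) * (norm u)\<^sup>2 + \<beta> * \<delta>"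
    using fx1 Ad key2 ee by (simp add: left_diff_distrib)
  thus ?thesis unfolding Let_def u_def[symmetric] g_def[symmetric] w_def[symmetric] x1_def[symmetric]
    by simp
qed

end
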